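(* Let $\alpha>0$, $\Sigma_0$ a symmetric positive definite $d\times d$ matrix with symmetric positive definite square root $\Lambda_0=\Sigma_0^{1/2}$, and for symmetric positive definite $\Sigma$ define $\Psi(\Sigma)=\frac1{(1+\alpha)^{d/2}}|\Sigma|^{-\alpha/2}-\left(1+\frac1\alpha\right)|\Sigma|^{-\alpha/2}\left|I_d+\alpha\Lambda_0\Sigma^{-1}\Lambda_0\right|^{-1/2}$. Then $\Psi$ has a unique minimizer over the set of $d\times d$ symmetric positive definite matrices, namely $\Sigma^\star=\Lambda_0\Lambda_0=\Sigma_0$. *)

theory Defs
  imports "HOL-Analysis.Analysis"
begin

definition spd :: "real^'n^'n \<Rightarrow> bool" where
  "spd A \<longleftrightarrow> transpose A = A \<and> (\<forall>x. x \<noteq> 0 \<longrightarrow> x \<bullet> (A *v x) > 0)"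

definition Psi :: "real \<Rightarrow> real^'n^'n \<Rightarrow> real^'n^'n \<Rightarrow> real" where
  "Psi \<alpha> \<Lambda>0 \<Sigma> =
     (1 / (1 + \<alpha>) powr (real CARD('n) / 2)) * det \<Sigma> powr (- \<alpha> / 2)
     - (1 + 1 / \<alpha>) * det \<Sigma> powr (- \<alpha> / 2)
       * det (mat 1 + \<alpha> *\<^sub>R (\<Lambda>0 ** matrix_inv \<Sigma> ** \<Lambda>0)) powr (- 1 / 2)"

end

theory Submission
  imports Defs
begin

lemma sym_inner:
  fixes M :: "real^'n^'n"
  assumes "transpose M = M"
  shows "(M *v x) \<bullet> y = x \<bullet> (M *v y)"
proof -
  have "x v* M = M *v x" using vector_transpose_matrix[of x M] assms by simp
  then show ?thesis using dot_lmul_matrix[of x M y] by simp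
qed

lemma eig_sub:
  fixes M :: "real^'n^'n"
  assumes sym: "transpose M = M"
  shows "subspace S \<Longrightarrow> (\<forall>x\<in>S. M *v x \<in> S) \<Longrightarrow> \<exists>B. B \<subseteq> S \<and> pairwise orthogonal B
     \<and> (\<forall>x\<in>B. norm x = 1 \<and> M *v x = (x \<bullet> (M *v x)) *\<^sub>R x) \<and> span B = S"
proof (induction "dim S" arbitrary: S rule: less_induct)
  case less
  note SS = less.prems(1) and inv = less.prems(2)
  show ?case
  proof (cases "S = {0}")
    case True then show ?thesis by (intro exI[of _ "{}"]) auto
  next
    case False
    then obtain z where z: "z \<in> S" "z \<noteq> 0" using SS subspace_0 by blast
    define K where "K = sphere 0 1 \<inter> S"
    define f where "f = (\<lambda>x::real^'n. x \<bullet> (M *v x))"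
    have zS: "z /\<^sub>R norm z \<in> S" using z(1) SS by (simp add: subspace_scale)
    have "norm (z /\<^sub>R norm z) = 1" using z(2) by simp
    then have zK: "z /\<^sub>R norm z \<in> K" using zS unfolding K_def by simp
    have cK: "compact K" unfolding K_def using SS by (intro compact_Int_closed compact_sphere closed_subspace)
    have cf: "continuous_on K f" unfolding f_def by (intro continuous_intros)
    obtain v where vK: "v \<in> K" and vmax: "\<forall>y\<in>K. f y \<le> f v"
      using continuous_attains_sup[OF cK _ cf] zK by blast
    define l where "l = f v"
    have vS: "v \<in> S" and nv: "norm v = 1" using vK K_def by auto
    have vv: "v \<bullet> v = 1" using nv by (simp add: norm_eq_1)
    have fscale: "f (c *\<^sub>R x) = c^2 * f x" for c x
      unfolding f_def by (simp add: matrix_vector_mult_scaleR power2_eq_square)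
    have bound: "f u \<le> l * (u \<bullet> u)" if "u \<in> S" for u
    proof (cases "u = 0")
      case True then show ?thesis by (simp add: f_def)
    next
      case False
      have uS: "u /\<^sub>R norm u \<in> S" using that SS by (simp add: subspace_scale)
      have "norm (u /\<^sub>R norm u) = 1" using False by simp
      then have "u /\<^sub>R norm u \<in> K" using uS unfolding K_def by simp
      then have "f (u /\<^sub>R norm u) \<le> l" using vmax l_def by blast
      then have "f u / (norm u)^2 \<le> l" using fscale[of "inverse (norm u)" u]
        by (simp add: power_inverse divide_inverse mult.commute)
      then show ?thesis using False by (simp add: divide_le_eq power2_norm_eq_inner mult.commute)
    qed
    have orth: "w \<bullet> (M *v v) = 0" if wS: "w \<in> S" and wv: "w \<bullet> v = 0" for w
    proof (rule ccontr)
      define a where "a = w \<bullet> (M *v v)"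
      define b where "b = w \<bullet> (M *v w) - l * (w \<bullet> w)"
      assume "w \<bullet> (M *v v) \<noteq> 0"
      then have a0: "a \<noteq> 0" using a_def by simp
      define t where "t = a / (\<bar>b\<bar> + 1)"
      have "v + t *\<^sub>R w \<in> S" using wS vS SS by (simp add: subspace_add subspace_scale)
      then have B: "f (v + t *\<^sub>R w) \<le> l * ((v + t *\<^sub>R w) \<bullet> (v + t *\<^sub>R w))" by (rule bound)
      have vw: "v \<bullet> (M *v w) = a" using sym_inner[OF sym, of v w] a_def by (simp add: inner_commute)
      have "f (v + t *\<^sub>R w) = l + 2 * t * a + t^2 * (w \<bullet> (M *v w))"
        unfolding f_def l_def using vw a_def
        by (simp add: matrix_vector_right_distrib matrix_vector_mult_scaleR inner_add_left inner_add_right power2_eq_square algebra_simps)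
      moreover have "(v + t *\<^sub>R w) \<bullet> (v + t *\<^sub>R w) = 1 + t^2 * (w \<bullet> w)"
        using vv wv by (simp add: inner_add_left inner_add_right inner_commute power2_eq_square)
      ultimately have "2 * t * a + t^2 * b \<le> 0" using B unfolding b_def by (simp add: algebra_simps)
      then have "(\<bar>b\<bar> + 1)^2 * (2 * t * a + t^2 * b) \<le> 0"
        by (simp add: mult_nonneg_nonpos)
      moreover have "(\<bar>b\<bar> + 1)^2 * (2 * t * a + t^2 * b) = a^2 * (2 * (\<bar>b\<bar> + 1) + b)"
      proof -
        have gen: "c^2 * (2 * (a/c) * a + (a/c)^2 * b) = a^2 * (2 * c + b)" if "c \<noteq> 0" for c :: real
          using that by (simp add: field_simps power2_eq_square)
        show ?thesis unfolding t_def by (rule gen) linarith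
      qed
      moreover have "a^2 * (2 * (\<bar>b\<bar> + 1) + b) > 0" using a0 by (intro mult_pos_pos) auto
      ultimately show False by linarith
    qed
    have eig: "M *v v = l *\<^sub>R v"
    proof -
      define r where "r = M *v v - l *\<^sub>R v"
      have rS: "r \<in> S" unfolding r_def using inv vS SS by (simp add: subspace_diff subspace_scale)
      have Mvv: "(M *v v) \<bullet> v = l" unfolding l_def f_def by (simp add: inner_commute)
      have rv: "r \<bullet> v = 0" unfolding r_def using Mvv vv by (simp add: inner_diff_left)
      have "r \<bullet> (M *v v) = 0" using orth rS rv by blast
      then have "r \<bullet> r = 0" using rv unfolding r_def by (simp add: inner_diff_right)
      then show ?thesis unfolding r_def by simp
    qed
    define S' where "S' = {x \<in> S. x \<bullet> v = 0}"
    have sub': "subspace S'" using SS unfolding S'_def subspace_def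
      by (auto simp: inner_add_left)
    have inv': "\<forall>x\<in>S'. M *v x \<in> S'"
    proof
      fix x assume "x \<in> S'"
      then have "x \<in> S" "x \<bullet> v = 0" unfolding S'_def by auto
      moreover have "(M *v x) \<bullet> v = x \<bullet> (M *v v)" by (rule sym_inner[OF sym])
      ultimately show "M *v x \<in> S'" using inv eig unfolding S'_def by auto
    qed
    have "span S' \<subset> span S"
    proof -
      have "v \<notin> S'" using vv unfolding S'_def by auto
      then have "S' \<subset> S" using vS unfolding S'_def by blast
      then show ?thesis unfolding span_eq_iff[THEN iffD2, OF sub'] span_eq_iff[THEN iffD2, OF SS] .
    qed
    then have "dim S' < dim S" by (rule dim_psubset)
    then obtain B' where B': "B' \<subseteq> S'" "pairwise orthogonal B'"
      "\<forall>x\<in>B'. norm x = 1 \<and> M *v x = (x \<bullet> (M *v x)) *\<^sub>R x" "span B' = S'"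
      using less.hyps sub' inv' by blast
    show ?thesis
    proof (intro exI[of _ "insert v B'"] conjI)
      show "insert v B' \<subseteq> S" using B'(1) vS S'_def by auto
      show "pairwise orthogonal (insert v B')" using B'(1,2) unfolding pairwise_insert S'_def
        by (auto simp: orthogonal_def inner_commute)
      show "\<forall>x\<in>insert v B'. norm x = 1 \<and> M *v x = (x \<bullet> (M *v x)) *\<^sub>R x"
        using B'(3) nv eig l_def f_def by auto
      show "span (insert v B') = S"
      proof
        show "span (insert v B') \<subseteq> S" using B'(1) vS S'_def SS by (intro span_minimal) auto
        show "S \<subseteq> span (insert v B')"
        proof
          fix x assume xS: "x \<in> S"
          have "x - (x \<bullet> v) *\<^sub>R v \<in> S'" unfolding S'_def using xS vS SS vv
            by (simp add: subspace_diff subspace_scale inner_diff_left)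
          then show "x \<in> span (insert v B')" unfolding span_breakdown_eq B'(4) by auto
        qed
      qed
    qed
  qed
qed

definition diagm :: "('n::finite \<Rightarrow> real) \<Rightarrow> real^'n^'n" where
  "diagm l = (\<chi> i j. if i = j then l i else 0)"

lemma det_diagm: "det (diagm l) = prod l UNIV"
  by (subst det_diagonal) (auto simp: diagm_def)

lemma matrix_add_rdistrib': "((A::real^'n^'m) + B) ** C = A ** C + B ** C"
  by (vector matrix_matrix_mult_def sum.distrib[symmetric] field_simps)

lemma spectral:
  fixes M :: "real^'n^'n"
  assumes sym: "transpose M = M"
  obtains Q :: "real^'n^'n" and l where "transpose Q ** Q = mat 1" "Q ** transpose Q = mat 1" "M ** Q = Q ** diagm l"
     "\<And>j. column j Q \<noteq> 0" "\<And>j. l j = column j Q \<bullet> (M *v column j Q)"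
proof -
  obtain B where B: "pairwise orthogonal B" "\<forall>x\<in>B. norm x = 1 \<and> M *v x = (x \<bullet> (M *v x)) *\<^sub>R x"
    "span B = UNIV"
    using eig_sub[OF sym, of UNIV] by auto
  have "0 \<notin> B" using B(2) by force
  then have ind: "independent B" using pairwise_orthogonal_independent B(1) by blast
  have fin: "finite B" using ind by (rule finiteI_independent)
  have "dim (span B) = card B" using ind by (rule dim_span_eq_card_independent)
  moreover have "dim (UNIV::(real^'n) set) = CARD('n)" by simp
  ultimately have cB: "card (UNIV::'n set) = card B" using B(3) by simp
  have "\<exists>h. bij_betw h (UNIV::'n set) B"
    by (rule finite_same_card_bij[OF _ fin cB]) simp
  then obtain b where bij: "bij_betw b (UNIV::'n set) B" by blast
  have bB: "b j \<in> B" for j by (rule bij_betw_apply[OF bij]) simp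
  have inj: "i = j" if "b i = b j" for i j by (rule inj_onD[OF bij_betw_imp_inj_on[OF bij] that]) simp_all
  define Q where "Q = (\<chi> i j. b j $ i)"
  have col: "column j Q = b j" for j unfolding Q_def column_def by (simp add: vec_eq_iff)
  have "orthogonal_matrix Q"
    unfolding orthogonal_matrix_orthonormal_columns col
  proof (intro conjI allI impI)
    fix i show "norm (b i) = 1" using B(2) bB by blast
  next
    fix i j :: 'n assume "i \<noteq> j"
    then have "b i \<noteq> b j" using inj by blast
    then show "orthogonal (b i) (b j)" using B(1) bB unfolding pairwise_def by blast
  qed
  then have o1: "transpose Q ** Q = mat 1" and o2: "Q ** transpose Q = mat 1"
    unfolding orthogonal_matrix_def by auto
  define l where "l j = b j \<bullet> (M *v b j)" for j
  have ev: "M *v b j = l j *\<^sub>R b j" for j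
  proof -
    have "M *v b j = (b j \<bullet> (M *v b j)) *\<^sub>R b j" using B(2) bB by blast
    then show ?thesis by (simp add: l_def)
  qed
  have "M ** Q = Q ** diagm l"
  proof -
    have "(M ** Q) $ i $ j = (M *v b j) $ i" for i j
      unfolding Q_def matrix_matrix_mult_def matrix_vector_mult_def by simp
    moreover have "(Q ** diagm l) $ i $ j = l j * b j $ i" for i j
      unfolding Q_def diagm_def matrix_matrix_mult_def by (simp add: if_distrib cong: if_cong)
    ultimately show ?thesis using ev by (simp add: vec_eq_iff)
  qed
  moreover have "column j Q \<noteq> 0" for j using col[of j] B(2) bB[of j] by (metis norm_zero zero_neq_one)
  moreover have "l j = column j Q \<bullet> (M *v column j Q)" for j using col l_def by simp
  ultimately show ?thesis using that o1 o2 by blast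
qed

lemma det_conj:
  fixes Q A :: "real^'n^'n"
  assumes "transpose Q ** Q = mat 1"
  shows "det (transpose Q ** A ** Q) = det A"
proof -
  have "det (transpose Q) * det Q = 1" using assms det_mul[of "transpose Q" Q] by simp
  then show ?thesis by (simp add: det_mul)
qed

lemma spd_spectral:
  fixes M :: "real^'n^'n" and \<alpha> :: real
  assumes sym: "transpose M = M" and pd: "\<And>x. x \<noteq> 0 \<Longrightarrow> x \<bullet> (M *v x) > 0"
  shows "\<exists>l :: 'n \<Rightarrow> real. (\<forall>j. l j > 0) \<and> det M = prod l UNIV
    \<and> det (mat 1 + \<alpha> *\<^sub>R M) = (\<Prod>j\<in>UNIV. 1 + \<alpha> * l j)
    \<and> ((\<forall>j. l j = 1) \<longrightarrow> M = mat 1)"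
proof -
  obtain Q :: "real^'n^'n" and l where Q: "transpose Q ** Q = mat 1" "Q ** transpose Q = mat 1" "M ** Q = Q ** diagm l"
     "\<And>j. column j Q \<noteq> 0" "\<And>j. l j = column j Q \<bullet> (M *v column j Q)"
    using spectral[OF sym] by blast
  have lpos: "l j > 0" for j using Q(4,5) pd by simp
  have D: "transpose Q ** M ** Q = diagm l"
    by (metis Q(1,3) matrix_mul_assoc matrix_mul_lid)
  have d1: "det M = prod l UNIV" using det_conj[OF Q(1), of M] unfolding D det_diagm by simp
  have d2: "det (mat 1 + \<alpha> *\<^sub>R M) = (\<Prod>j\<in>UNIV. 1 + \<alpha> * l j)"
  proof -
    have "transpose Q ** (mat 1 + \<alpha> *\<^sub>R M) ** Q = transpose Q ** Q + \<alpha> *\<^sub>R (transpose Q ** M ** Q)"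
      by (simp add: matrix_add_ldistrib matrix_add_rdistrib' matrix_scalar_ac scalar_matrix_assoc matrix_mul_assoc)
    also have "\<dots> = diagm (\<lambda>j. 1 + \<alpha> * l j)"
      using Q(1) D by (simp add: diagm_def mat_def vec_eq_iff)
    finally have eq: "transpose Q ** (mat 1 + \<alpha> *\<^sub>R M) ** Q = diagm (\<lambda>j. 1 + \<alpha> * l j)" .
    have "det (mat 1 + \<alpha> *\<^sub>R M) = det (diagm (\<lambda>j. 1 + \<alpha> * l j))"
      unfolding eq[symmetric] by (rule det_conj[OF Q(1), symmetric])
    then show ?thesis by (simp add: det_diagm)
  qed
  have d3: "M = mat 1" if "\<forall>j. l j = 1"
  proof -
    have "diagm l = mat 1" using that by (simp add: diagm_def mat_def vec_eq_iff)
    then have "M ** Q = Q" using Q(3) by simp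
    then have "M ** (Q ** transpose Q) = Q ** transpose Q" by (simp add: matrix_mul_assoc)
    then show ?thesis using Q(2) by simp
  qed
  show ?thesis
    by (intro exI[of _ l] conjI allI impI lpos d1 d2 d3) simp
qed

lemma amgm:
  fixes r t :: real
  assumes r: "0 < r" "r < 1" and t: "0 < t"
  shows "t powr r \<le> r * t + (1 - r)"
  using Youngs_inequality_0[of r "1-r" t 1] assms by simp

lemma amgm_strict:
  fixes r t :: real
  assumes r: "0 < r" "r < 1" and t: "0 < t" "t \<noteq> 1"
  shows "t powr r < r * t + (1 - r)"
proof -
  define u where "u = sqrt t"
  have u0: "0 < u" using t by (simp add: u_def)
  have u1: "u \<noteq> 1" using t by (simp add: u_def)
  have ut: "t = u * u" using t by (simp add: u_def)
  have "u powr r \<le> r*u + (1-r)" by (rule amgm[OF r u0])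
  moreover have "0 \<le> u powr r" by simp
  ultimately have "(u powr r)^2 \<le> (r*u + (1-r))^2" by (rule power_mono)
  moreover have "(u powr r)^2 = t powr r"
    unfolding ut power2_eq_square using powr_mult[of u u r] u0 by simp
  moreover have "r*t + (1-r) - (r*u + (1-r))^2 = r*(1-r)*(u-1)^2"
    unfolding ut by (simp add: power2_eq_square algebra_simps)
  moreover have "r*(1-r)*(u-1)^2 > 0" using r u1 by simp
  ultimately show ?thesis by linarith
qed

lemma alg_final:
  fixes \<alpha> A c p q Yh :: real
  assumes a: "\<alpha> > 0" and A: "A > 0" and c: "c > 0" and p: "p > 0"
    and Yh: "Yh \<le> q / A" and key: "\<alpha>*p - (1+\<alpha>)*(p*q) + 1 \<ge> 0"
  shows "(1/A)*c - (1+1/\<alpha>)*c*(1/A) \<le> (1/A)*(c*p) - (1+1/\<alpha>)*(c*p)*Yh"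
    and "Yh < q / A \<Longrightarrow> (1/A)*c - (1+1/\<alpha>)*c*(1/A) < (1/A)*(c*p) - (1+1/\<alpha>)*(c*p)*Yh"
proof -
  have e1: "p - (1+1/\<alpha>)*(p*q) - (1 - (1+1/\<alpha>)) = (\<alpha>*p - (1+\<alpha>)*(p*q) + 1)/\<alpha>"
    using a by (simp add: field_simps)
  have "(\<alpha>*p - (1+\<alpha>)*(p*q) + 1)/\<alpha> \<ge> 0" using key a by simp
  then have h1: "1 - (1+1/\<alpha>) \<le> p - (1+1/\<alpha>)*(p*q)" using e1 by linarith
  have cA: "c/A \<ge> 0" using c A by simp
  have h2: "(c/A) * (1 - (1+1/\<alpha>)) \<le> (c/A) * (p - (1+1/\<alpha>)*(p*q))"
    using mult_left_mono[OF h1 cA] .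
  have e2: "(1/A)*c - (1+1/\<alpha>)*c*(1/A) = (c/A) * (1 - (1+1/\<alpha>))" by (simp add: algebra_simps)
  have e3: "(1/A)*(c*p) - (1+1/\<alpha>)*(c*p)*(q/A) = (c/A) * (p - (1+1/\<alpha>)*(p*q))"
    by (simp add: algebra_simps)
  have a1: "1+1/\<alpha> > 0" using a by (simp add: add_pos_pos)
  have k: "(1+1/\<alpha>)*(c*p) > 0" using a1 c p by simp
  have h3: "(1+1/\<alpha>)*(c*p)*Yh \<le> (1+1/\<alpha>)*(c*p)*(q/A)"
    using mult_left_mono[OF Yh, of "(1+1/\<alpha>)*(c*p)"] k by simp
  show "(1/A)*c - (1+1/\<alpha>)*c*(1/A) \<le> (1/A)*(c*p) - (1+1/\<alpha>)*(c*p)*Yh"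
    using h2 h3 e2 e3 by linarith
  assume Yl: "Yh < q / A"
  have h4: "(1+1/\<alpha>)*(c*p)*Yh < (1+1/\<alpha>)*(c*p)*(q/A)"
    using mult_strict_left_mono[OF Yl k] by simp
  show "(1/A)*c - (1+1/\<alpha>)*c*(1/A) < (1/A)*(c*p) - (1+1/\<alpha>)*(c*p)*Yh"
    using h2 h4 e2 e3 by linarith
qed

lemma real_key:
  fixes \<alpha> D0 :: real and l :: "'n::finite \<Rightarrow> real"
  assumes a: "\<alpha> > 0" and D0: "D0 > 0" and l: "\<And>j. l j > 0"
  shows "(1 / (1+\<alpha>) powr (real CARD('n)/2)) * D0 powr (-\<alpha>/2)
           - (1 + 1/\<alpha>) * D0 powr (-\<alpha>/2) * ((1+\<alpha>)^CARD('n)) powr (-1/2)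
        \<le> (1 / (1+\<alpha>) powr (real CARD('n)/2)) * (D0 / prod l UNIV) powr (-\<alpha>/2)
           - (1 + 1/\<alpha>) * (D0 / prod l UNIV) powr (-\<alpha>/2) * (\<Prod>j\<in>UNIV. 1 + \<alpha> * l j) powr (-1/2)"
    and "(\<exists>j. l j \<noteq> 1) \<Longrightarrow>
         (1 / (1+\<alpha>) powr (real CARD('n)/2)) * D0 powr (-\<alpha>/2)
           - (1 + 1/\<alpha>) * D0 powr (-\<alpha>/2) * ((1+\<alpha>)^CARD('n)) powr (-1/2)
        < (1 / (1+\<alpha>) powr (real CARD('n)/2)) * (D0 / prod l UNIV) powr (-\<alpha>/2)
           - (1 + 1/\<alpha>) * (D0 / prod l UNIV) powr (-\<alpha>/2) * (\<Prod>j\<in>UNIV. 1 + \<alpha> * l j) powr (-1/2)"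
proof -
  define d where "d = real CARD('n)"
  define P where "P = prod l UNIV"
  define Y where "Y = (\<Prod>j\<in>UNIV. 1 + \<alpha> * l j)"
  define \<beta> where "\<beta> = \<alpha> / (1+\<alpha>)"
  define A where "A = (1+\<alpha>) powr (d/2)"
  define c where "c = D0 powr (-\<alpha>/2)"
  define p where "p = P powr (\<alpha>/2)"
  define q where "q = P powr (-\<beta>/2)"
  have b0: "0 < \<beta>" and b1: "\<beta> < 1" using a by (auto simp: \<beta>_def field_simps)
  have P0: "P > 0" unfolding P_def using l by (simp add: prod_pos)
  have A0: "A > 0" unfolding A_def using a by simp
  have c0: "c > 0" unfolding c_def using D0 by simp
  have p0: "p > 0" unfolding p_def using P0 by simp
  have a0: "0 < 1+\<alpha>" using a by simp
  have pw: "(1+\<alpha>)^CARD('n) = (1+\<alpha>) powr d" unfolding d_def by (rule powr_realpow[OF a0, symmetric])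
  have F1: "((1+\<alpha>)^CARD('n)) powr (-1/2) = 1/A"
  proof -
    have h1: "((1+\<alpha>) powr d) powr (-1/2) = (1+\<alpha>) powr (d * (-1/2))" by (rule powr_powr)
    have h2: "d * (-1/2) = - (d/2)" by simp
    have h3: "(1+\<alpha>) powr (- (d/2)) = 1/A" unfolding A_def by (rule powr_minus_divide)
    show ?thesis unfolding pw h1 h2 h3 by (rule refl)
  qed
  have F2: "(D0 / P) powr (-\<alpha>/2) = c * p"
  proof -
    have e: "-\<alpha>/2 = -(\<alpha>/2)" by simp
    have h1: "(D0 / P) powr (-\<alpha>/2) = D0 powr (-\<alpha>/2) / P powr (-\<alpha>/2)" by (rule powr_divide)
    have h2: "P powr (-\<alpha>/2) = 1/p" unfolding p_def e by (rule powr_minus_divide)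
    show ?thesis unfolding c_def h1 h2 by simp
  qed
  have each: "(1+\<alpha>) * l j powr \<beta> \<le> 1 + \<alpha> * l j" for j
  proof -
    have "l j powr \<beta> \<le> \<beta> * l j + (1 - \<beta>)" by (rule amgm[OF b0 b1 l])
    then have "(1+\<alpha>) * l j powr \<beta> \<le> (1+\<alpha>) * (\<beta> * l j + (1 - \<beta>))" using a by simp
    also have "(1+\<alpha>) * (\<beta> * l j + (1 - \<beta>)) = 1 + \<alpha> * l j" unfolding \<beta>_def using a
      by (simp add: field_simps)
    finally show ?thesis .
  qed
  have eachs: "(1+\<alpha>) * l j powr \<beta> < 1 + \<alpha> * l j" if "l j \<noteq> 1" for j
  proof -
    have "l j powr \<beta> < \<beta> * l j + (1 - \<beta>)" by (rule amgm_strict[OF b0 b1 l that])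
    then have "(1+\<alpha>) * l j powr \<beta> < (1+\<alpha>) * (\<beta> * l j + (1 - \<beta>))" using a by simp
    also have "(1+\<alpha>) * (\<beta> * l j + (1 - \<beta>)) = 1 + \<alpha> * l j" unfolding \<beta>_def using a
      by (simp add: field_simps)
    finally show ?thesis .
  qed
  have prodeq: "(\<Prod>j\<in>UNIV. (1+\<alpha>) * l j powr \<beta>) = (1+\<alpha>)^CARD('n) * P powr \<beta>"
    unfolding P_def by (simp add: prod.distrib prod_powr_distrib)
  define Z where "Z = (1+\<alpha>)^CARD('n) * P powr \<beta>"
  have Z0: "Z > 0" unfolding Z_def using a P0 by simp
  have ZY: "Z \<le> Y" unfolding Z_def Y_def prodeq[symmetric]
    by (rule prod_mono) (use each a l in \<open>auto intro: mult_nonneg_nonneg\<close>)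
  have ZYs: "Z < Y" if ex: "\<exists>j. l j \<noteq> 1"
  proof -
    obtain j where "l j \<noteq> 1" using ex by blast
    show ?thesis unfolding Z_def Y_def prodeq[symmetric]
      by (rule prod_mono_strict[of j]) (use eachs[OF \<open>l j \<noteq> 1\<close>] each a l in \<open>auto intro: add_pos_pos\<close>)
  qed
  have Zh: "Z powr (-1/2) = q / A"
  proof -
    have h1: "Z powr (-1/2) = ((1+\<alpha>)^CARD('n)) powr (-1/2) * (P powr \<beta>) powr (-1/2)"
      unfolding Z_def by (rule powr_mult)
    have h2: "(P powr \<beta>) powr (-1/2) = q" unfolding q_def powr_powr by simp
    show ?thesis unfolding h1 h2 F1 by simp
  qed
  have Yh: "Y powr (-1/2) \<le> q / A" using powr_mono2'[of "-1/2" Z Y] Z0 ZY Zh by simp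
  have Yhs: "Y powr (-1/2) < q / A" if "\<exists>j. l j \<noteq> 1"
    using powr_less_mono2_neg[of "-1/2" Z Y] Z0 ZYs[OF that] Zh by simp
  have pq: "p * q = p powr \<beta>"
  proof -
    have h1: "p * q = P powr (\<alpha>/2 + -\<beta>/2)" unfolding p_def q_def by (rule powr_add[symmetric])
    have h2: "\<alpha>/2 + -\<beta>/2 = \<alpha>/2 * \<beta>" unfolding \<beta>_def using a0 by (simp add: field_simps)
    have h3: "p powr \<beta> = P powr (\<alpha>/2 * \<beta>)" unfolding p_def by (rule powr_powr)
    show ?thesis unfolding h1 h2 h3 by (rule refl)
  qed
  have key: "\<alpha>*p - (1+\<alpha>)*(p*q) + 1 \<ge> 0"
  proof -
    have "p powr \<beta> \<le> \<beta> * p + (1 - \<beta>)" by (rule amgm[OF b0 b1 p0])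
    then have "(1+\<alpha>) * p powr \<beta> \<le> (1+\<alpha>) * (\<beta> * p + (1 - \<beta>))" using a by simp
    also have "(1+\<alpha>) * (\<beta> * p + (1 - \<beta>)) = \<alpha> * p + 1" unfolding \<beta>_def using a
      by (simp add: field_simps)
    finally show ?thesis using pq by simp
  qed
  note AF = alg_final[OF a A0 c0 p0 Yh key]
  have L: "(1 / (1+\<alpha>) powr (real CARD('n)/2)) * D0 powr (-\<alpha>/2)
           - (1 + 1/\<alpha>) * D0 powr (-\<alpha>/2) * ((1+\<alpha>)^CARD('n)) powr (-1/2)
         = (1/A)*c - (1+1/\<alpha>)*c*(1/A)" unfolding F1 A_def c_def d_def by simp
  have R: "(1 / (1+\<alpha>) powr (real CARD('n)/2)) * (D0 / prod l UNIV) powr (-\<alpha>/2)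
           - (1 + 1/\<alpha>) * (D0 / prod l UNIV) powr (-\<alpha>/2) * (\<Prod>j\<in>UNIV. 1 + \<alpha> * l j) powr (-1/2)
         = (1/A)*(c*p) - (1+1/\<alpha>)*(c*p)*(Y powr (-1/2))"
    unfolding F2[unfolded P_def] A_def d_def Y_def by simp
  show "(1 / (1+\<alpha>) powr (real CARD('n)/2)) * D0 powr (-\<alpha>/2)
           - (1 + 1/\<alpha>) * D0 powr (-\<alpha>/2) * ((1+\<alpha>)^CARD('n)) powr (-1/2)
        \<le> (1 / (1+\<alpha>) powr (real CARD('n)/2)) * (D0 / prod l UNIV) powr (-\<alpha>/2)
           - (1 + 1/\<alpha>) * (D0 / prod l UNIV) powr (-\<alpha>/2) * (\<Prod>j\<in>UNIV. 1 + \<alpha> * l j) powr (-1/2)"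
    unfolding L R by (rule AF(1))
  assume "\<exists>j. l j \<noteq> 1"
  then show "(1 / (1+\<alpha>) powr (real CARD('n)/2)) * D0 powr (-\<alpha>/2)
           - (1 + 1/\<alpha>) * D0 powr (-\<alpha>/2) * ((1+\<alpha>)^CARD('n)) powr (-1/2)
        < (1 / (1+\<alpha>) powr (real CARD('n)/2)) * (D0 / prod l UNIV) powr (-\<alpha>/2)
           - (1 + 1/\<alpha>) * (D0 / prod l UNIV) powr (-\<alpha>/2) * (\<Prod>j\<in>UNIV. 1 + \<alpha> * l j) powr (-1/2)"
    unfolding L R by (rule AF(2)[OF Yhs])
qed

lemma invertible_inv:
  fixes A :: "real^'n^'n"
  assumes "invertible A"
  shows "A ** matrix_inv A = mat 1" "matrix_inv A ** A = mat 1"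
proof -
  have "\<exists>A'. A ** A' = mat 1 \<and> A' ** A = mat 1" using assms unfolding invertible_def by blast
  then have "A ** matrix_inv A = mat 1 \<and> matrix_inv A ** A = mat 1"
    unfolding matrix_inv_def by (rule someI_ex)
  then show "A ** matrix_inv A = mat 1" "matrix_inv A ** A = mat 1" by auto
qed

lemma spd_invertible:
  fixes A :: "real^'n^'n"
  assumes "spd A"
  shows "invertible A"
proof -
  have "\<forall>x. A *v x = 0 \<longrightarrow> x = 0"
  proof (intro allI impI)
    fix x assume "A *v x = 0"
    then have "x \<bullet> (A *v x) = 0" by simp
    then show "x = 0" using assms unfolding spd_def by force
  qed
  then have "\<exists>B. B ** A = mat 1" using matrix_left_invertible_ker[of A] by blast
  then show ?thesis using invertible_left_inverse by blast
qed

lemma inv_sym: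
  fixes A Ai :: "real^'n^'n"
  assumes "transpose A = A" "A ** Ai = mat 1" "Ai ** A = mat 1"
  shows "transpose Ai = Ai"
proof -
  have "transpose Ai ** A = mat 1"
    using arg_cong[OF assms(2), of transpose] assms(1) by (simp add: matrix_transpose_mul)
  then have "transpose Ai = (transpose Ai ** A) ** Ai" using assms(2)
    by (metis matrix_mul_assoc matrix_mul_rid)
  then show ?thesis using \<open>transpose Ai ** A = mat 1\<close> by simp
qed

lemma key:
  fixes \<alpha> :: real and \<Lambda>0 \<Sigma> :: "real^'n^'n"
  assumes a: "\<alpha> > 0" and L: "spd \<Lambda>0" and S: "spd \<Sigma>"
  shows "Psi \<alpha> \<Lambda>0 (\<Lambda>0 ** \<Lambda>0) \<le> Psi \<alpha> \<Lambda>0 \<Sigma>"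
    and "\<Sigma> \<noteq> \<Lambda>0 ** \<Lambda>0 \<Longrightarrow> Psi \<alpha> \<Lambda>0 (\<Lambda>0 ** \<Lambda>0) < Psi \<alpha> \<Lambda>0 \<Sigma>"
proof -
  define Si where "Si = matrix_inv \<Sigma>"
  define Li where "Li = matrix_inv \<Lambda>0"
  define N where "N = \<Lambda>0 ** Si ** \<Lambda>0"
  have Ssym: "transpose \<Sigma> = \<Sigma>" and Spd: "\<And>x. x \<noteq> 0 \<Longrightarrow> x \<bullet> (\<Sigma> *v x) > 0"
    using S unfolding spd_def by auto
  have Lsym: "transpose \<Lambda>0 = \<Lambda>0" using L unfolding spd_def by auto
  note SI = invertible_inv[OF spd_invertible[OF S], folded Si_def]
  note LI = invertible_inv[OF spd_invertible[OF L], folded Li_def]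
  have Sisym: "transpose Si = Si" by (rule inv_sym[OF Ssym SI])
  have Nsym: "transpose N = N" unfolding N_def
    by (simp add: matrix_transpose_mul Lsym Sisym matrix_mul_assoc)
  have Npd: "x \<bullet> (N *v x) > 0" if x0: "x \<noteq> 0" for x
  proof -
    define y where "y = \<Lambda>0 *v x"
    have y0: "y \<noteq> 0"
    proof
      assume "y = 0"
      then have "Li *v y = 0" by simp
      then show False using x0 LI(2) unfolding y_def by (simp add: matrix_vector_mul_assoc)
    qed
    define z where "z = Si *v y"
    have yz: "y = \<Sigma> *v z" unfolding z_def using SI(1) by (simp add: matrix_vector_mul_assoc)
    have z0: "z \<noteq> 0" using y0 yz by auto
    have "x \<bullet> (N *v x) = x \<bullet> (\<Lambda>0 *v z)" unfolding N_def z_def y_def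
      by (simp add: matrix_vector_mul_assoc matrix_mul_assoc)
    also have "\<dots> = y \<bullet> z" unfolding y_def using sym_inner[OF Lsym, of x z] by simp
    also have "\<dots> = z \<bullet> (\<Sigma> *v z)" using yz by (simp add: inner_commute)
    finally show ?thesis using Spd[OF z0] by simp
  qed
  have ex: "\<exists>l :: 'n \<Rightarrow> real. (\<forall>j. l j > 0) \<and> det N = prod l UNIV
    \<and> det (mat 1 + \<alpha> *\<^sub>R N) = (\<Prod>j\<in>UNIV. 1 + \<alpha> * l j)
    \<and> ((\<forall>j. l j = 1) \<longrightarrow> N = mat 1)"
    by (rule spd_spectral[OF Nsym]) (rule Npd)
  obtain l :: "'n \<Rightarrow> real" where l0: "\<forall>j. l j > 0" and l: "det N = prod l UNIV"
    "det (mat 1 + \<alpha> *\<^sub>R N) = (\<Prod>j\<in>UNIV. 1 + \<alpha> * l j)"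
    "(\<forall>j. l j = 1) \<longrightarrow> N = mat 1"
    using ex by blast
  have lpos: "\<And>j. l j > 0" using l0 by blast
  define D0 where "D0 = det \<Lambda>0 * det \<Lambda>0"
  have dL: "det \<Lambda>0 * det Li = 1" using arg_cong[OF LI(1), of det] by (simp add: det_mul)
  have dL0: "det \<Lambda>0 \<noteq> 0" using dL by auto
  have D0pos: "D0 > 0" unfolding D0_def using not_real_square_gt_zero[of "det \<Lambda>0"] dL0 by blast
  have dS: "det \<Sigma> * det Si = 1" using arg_cong[OF SI(1), of det] by (simp add: det_mul)
  have dN: "det N = D0 * det Si" unfolding N_def D0_def by (simp add: det_mul mult_ac)
  have detS: "det \<Sigma> = D0 / prod l UNIV"
  proof -
    have P0: "prod l UNIV > 0" using lpos by (simp add: prod_pos)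
    have e1: "D0 * det Si = prod l UNIV" using dN l(1) by simp
    have dSi: "det Si = prod l UNIV / D0" using e1 D0pos by (simp add: field_simps)
    have "det \<Sigma> * (prod l UNIV / D0) = 1" using dS unfolding dSi .
    moreover have gen: "x = D / P" if "x * (P / D) = 1" "P > 0" "D > 0" for x P D :: real
      using that by (simp add: field_simps)
    ultimately show ?thesis using P0 D0pos by blast
  qed
  define S0 where "S0 = \<Lambda>0 ** \<Lambda>0"
  have S0inv: "invertible S0" unfolding S0_def
    by (rule invertible_mult[OF spd_invertible[OF L] spd_invertible[OF L]])
  note S0I = invertible_inv[OF S0inv]
  have N0: "\<Lambda>0 ** matrix_inv S0 ** \<Lambda>0 = mat 1"
  proof -
    have "\<Lambda>0 ** (\<Lambda>0 ** matrix_inv S0 ** \<Lambda>0) = \<Lambda>0"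
      using S0I(1) unfolding S0_def by (simp add: matrix_mul_assoc)
    then have "Li ** (\<Lambda>0 ** (\<Lambda>0 ** matrix_inv S0 ** \<Lambda>0)) = Li ** \<Lambda>0" by simp
    then show ?thesis using LI(2) by (simp add: matrix_mul_assoc)
  qed
  have detS0: "det S0 = D0" unfolding S0_def D0_def by (simp add: det_mul)
  have detI: "det (mat 1 + \<alpha> *\<^sub>R (mat 1 :: real^'n^'n)) = (1+\<alpha>)^CARD('n)"
  proof -
    have "mat 1 + \<alpha> *\<^sub>R (mat 1 :: real^'n^'n) = diagm (\<lambda>_. 1 + \<alpha>)"
      by (simp add: diagm_def mat_def vec_eq_iff)
    then show ?thesis by (simp add: det_diagm)
  qed
  have Psi0: "Psi \<alpha> \<Lambda>0 S0 = (1 / (1+\<alpha>) powr (real CARD('n)/2)) * D0 powr (-\<alpha>/2)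
           - (1 + 1/\<alpha>) * D0 powr (-\<alpha>/2) * ((1+\<alpha>)^CARD('n)) powr (-1/2)"
    unfolding Psi_def N0 detI detS0 by simp
  have PsiS: "Psi \<alpha> \<Lambda>0 \<Sigma> = (1 / (1+\<alpha>) powr (real CARD('n)/2)) * (D0 / prod l UNIV) powr (-\<alpha>/2)
           - (1 + 1/\<alpha>) * (D0 / prod l UNIV) powr (-\<alpha>/2) * (\<Prod>j\<in>UNIV. 1 + \<alpha> * l j) powr (-1/2)"
    unfolding Psi_def detS l(2)[unfolded N_def Si_def, symmetric] by simp
  show "Psi \<alpha> \<Lambda>0 (\<Lambda>0 ** \<Lambda>0) \<le> Psi \<alpha> \<Lambda>0 \<Sigma>"
    using real_key(1)[OF a D0pos lpos] Psi0 PsiS unfolding S0_def by simp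
  assume ne: "\<Sigma> \<noteq> \<Lambda>0 ** \<Lambda>0"
  have "\<exists>j. l j \<noteq> 1"
  proof (rule ccontr)
    assume "\<not> (\<exists>j. l j \<noteq> 1)"
    then have "N = mat 1" using l(3) by blast
    then have "Li ** N ** \<Lambda>0 = Li ** \<Lambda>0" by simp
    then have "Si ** (\<Lambda>0 ** \<Lambda>0) = mat 1" using LI unfolding N_def
      by (simp add: matrix_mul_assoc)
    then have "\<Sigma> ** (Si ** (\<Lambda>0 ** \<Lambda>0)) = \<Sigma>" by simp
    then have "\<Sigma> = \<Lambda>0 ** \<Lambda>0" using SI(1) by (simp add: matrix_mul_assoc)
    then show False using ne by simp
  qed
  then show "Psi \<alpha> \<Lambda>0 (\<Lambda>0 ** \<Lambda>0) < Psi \<alpha> \<Lambda>0 \<Sigma>"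
    using real_key(2)[OF a D0pos lpos] Psi0 PsiS unfolding S0_def by simp
qed

theorem lemma7:
  fixes \<alpha> :: real and \<Sigma>0 \<Lambda>0 :: "real^'n^'n"
  assumes "\<alpha> > 0"
    and "spd \<Sigma>0"
    and "spd \<Lambda>0"
    and "\<Lambda>0 ** \<Lambda>0 = \<Sigma>0"
  shows "(\<forall>\<Sigma>. spd \<Sigma> \<longrightarrow> Psi \<alpha> \<Lambda>0 \<Sigma>0 \<le> Psi \<alpha> \<Lambda>0 \<Sigma>)
       \<and> (\<forall>S. spd S \<and> (\<forall>\<Sigma>. spd \<Sigma> \<longrightarrow> Psi \<alpha> \<Lambda>0 S \<le> Psi \<alpha> \<Lambda>0 \<Sigma>) \<longrightarrow> S = \<Sigma>0)"
proof (intro conjI allI impI)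
  fix \<Sigma> :: "real^'n^'n" assume "spd \<Sigma>"
  then show "Psi \<alpha> \<Lambda>0 \<Sigma>0 \<le> Psi \<alpha> \<Lambda>0 \<Sigma>" using key(1)[OF assms(1,3)] assms(4) by blast
next
  fix S :: "real^'n^'n"
  assume h: "spd S \<and> (\<forall>\<Sigma>. spd \<Sigma> \<longrightarrow> Psi \<alpha> \<Lambda>0 S \<le> Psi \<alpha> \<Lambda>0 \<Sigma>)"
  then have "Psi \<alpha> \<Lambda>0 S \<le> Psi \<alpha> \<Lambda>0 \<Sigma>0" using assms(2) by blast
  then show "S = \<Sigma>0" using key(2)[OF assms(1,3), of S] h assms(4) by force
qed

end
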